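(* Let $v,a,b,c\in\mathbb{C}$ with $\Re(v)<3$, $\Re(c)>0$, and $\Re(vc+a+b)>0$, $\Re(vc+a-b)>0$, $\Re(vc-a+b)>0$, $\Re(vc-a-b)>0$. Put $\sigma_3=\frac v2-\frac{a}{2c}-\frac{b}{2c}$, $\sigma_4=\frac v2-\frac{a}{2c}+\frac{b}{2c}$, $\sigma_5=\frac v2+\frac{a}{2c}+\frac{b}{2c}$, $\sigma_6=\frac v2+\frac{a}{2c}-\frac{b}{2c}$, $P=(vc-a-b)(vc+a+b)(vc-a+b)(vc+a-b)$, and assume $\frac v2\notin\mathbb{Z}_0^-$, $1+\sigma_j\notin\mathbb{Z}_0^-$ ($j=3,4,5,6$). Then $$ \int_0^\infty\frac{\sinh(ax)\sinh(bx)}{\sinh^{v}(cx)}\,dx=\frac{2^{v+1}\,v\,a\,b\,c}{P}\;{}_6F_5\!\left(\begin{matrix}v,\ 1+\frac v2,\ \sigma_3,\ \sigma_5,\ \sigma_4,\ \sigma_6\\ \frac v2,\ 1+\sigma_3,\ 1+\sigma_5,\ 1+\sigma_4,\ 1+\sigma_6\end{matrix};\,1\right). $$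
   Context: $\mathbb{Z}_0^-=\{0,-1,-2,\dots\}$. The Pochhammer symbol is $(\lambda)_0=1$, $(\lambda)_n=\lambda(\lambda+1)\cdots(\lambda+n-1)$ for $n\ge1$. The generalized hypergeometric series is ${}_pF_q\!\left(\begin{matrix}\alpha_1,\dots,\alpha_p\\ \beta_1,\dots,\beta_q\end{matrix};z\right)=\sum_{n=0}^\infty\frac{(\alpha_1)_n\cdots(\alpha_p)_n}{(\beta_1)_n\cdots(\beta_q)_n}\frac{z^n}{n!}$ (with no $\beta_j\in\mathbb{Z}_0^-$); when $p=q+1$ and $z=1$ it converges if $\Re(\sum\beta_j-\sum\alpha_i)>0$. For $\Re(c)>0$ and $x>0$, the complex power $\sinh^{v}(cx)$ means $2^{-v}e^{vcx}(1-e^{-2cx})^{v}$, with the principal branch of $(1-e^{-2cx})^{v}$ (this agrees with the ordinary real power when $c>0$ and $v$ is real). *)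

theory Defs
  imports "HOL-Analysis.Analysis" "HOL-Library.Nonpos_Ints"
begin

definition hypergeom :: "complex list \<Rightarrow> complex list \<Rightarrow> complex \<Rightarrow> complex" where
  "hypergeom as bs z =
     (\<Sum>n. (\<Prod>a\<leftarrow>as. pochhammer a n) / (\<Prod>b\<leftarrow>bs. pochhammer b n) * z ^ n / fact n)"

text \<open>Complex power sinh(cx)^v := 2^(-v) e^(vcx) (1 - e^(-2cx))^v, principal branch.\<close>
definition sinh_pow :: "complex \<Rightarrow> complex \<Rightarrow> real \<Rightarrow> complex" where
  "sinh_pow v c x = 2 powr (-v) * exp (v * c * of_real x) * (1 - exp (-2 * c * of_real x)) powr v"

end

theory Submission
  imports Defs
begin


lemma cosh_bound: "norm (cosh (w::complex)) \<le> exp \<bar>Re w\<bar>"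
proof -
  have "norm (cosh w) = norm (exp w + exp (-w)) / 2" by (simp add: cosh_field_def norm_divide)
  also have "\<dots> \<le> (norm (exp w) + norm (exp (-w))) / 2"
    by (intro divide_right_mono norm_triangle_ineq) auto
  also have "\<dots> = (exp (Re w) + exp (- Re w)) / 2" by (simp add: norm_exp_eq_Re)
  also have "\<dots> \<le> exp \<bar>Re w\<bar>" by (cases "Re w \<ge> 0") auto
  finally show ?thesis .
qed

lemma sinh_bound: "norm (sinh (z::complex)) \<le> exp \<bar>Re z\<bar> * norm z"
proof -
  have "norm (sinh z - sinh 0) \<le> exp \<bar>Re z\<bar> * norm (z - 0)"
  proof (rule field_differentiable_bound[where S="closed_segment 0 z" and f'=cosh])
    fix w assume w: "w \<in> closed_segment 0 z"
    show "(sinh has_field_derivative cosh w) (at w within closed_segment 0 z)"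
      by (rule derivative_eq_intros refl | simp)+
    from w obtain u :: real where u: "0 \<le> u" "u \<le> 1" "w = u *\<^sub>R z"
      by (auto simp: in_segment)
    have "\<bar>Re w\<bar> \<le> \<bar>Re z\<bar>" using u by (simp add: abs_mult mult_left_le_one_le)
    then show "norm (cosh w) \<le> exp \<bar>Re z\<bar>"
      using cosh_bound[of w] by (meson exp_le_cancel_iff order_trans)
  qed auto
  then show ?thesis by simp
qed

lemma exp_neg_lim:
  fixes r :: real assumes "r > 0"
  shows "((\<lambda>x::real. exp (- (r * x))) \<longlongrightarrow> 0) at_top"
proof -
  have "filterlim (\<lambda>x::real. r * x) at_top at_top"
    by (rule filterlim_tendsto_pos_mult_at_top[OF tendsto_const assms filterlim_ident])
  then have "filterlim (\<lambda>x::real. - (r * x)) at_bot at_top"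
    by (simp add: filterlim_uminus_at_top)
  then show ?thesis by (rule filterlim_compose[OF exp_at_bot])
qed

lemma exp_integral:
  fixes u :: complex assumes u: "Re u > 0"
  shows "((\<lambda>x::real. exp (- (u * of_real x))) has_integral 1/u) {0<..}"
    and "(\<lambda>x::real. exp (- (u * of_real x))) absolutely_integrable_on {0<..}"
proof -
  let ?f = "\<lambda>x::real. exp (- (u * of_real x))"
  have nf: "norm (?f x) = exp (- (Re u * x))" for x
    by (simp add: norm_exp_eq_Re)
  have ai: "?f absolutely_integrable_on {0..}"
    unfolding set_integrable_def
  proof (rule Bochner_Integration.integrable_bound [OF _ _ AE_I2])
    show "integrable lebesgue (\<lambda>x. indicat_real {0..} x *\<^sub>R exp (- (Re u) * x))" using u
      by (intro nonnegative_absolutely_integrable_1 [unfolded set_integrable_def] integrable_on_exp_minus_to_infinity) auto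
    show "(\<lambda>x. indicat_real {0..} x *\<^sub>R ?f x) \<in> borel_measurable lebesgue"
      by (intro measurable_completion)
           (auto intro!: borel_measurable_continuous_on_indicator continuous_intros)
    fix x :: real
    show "norm (indicat_real {0..} x *\<^sub>R ?f x) \<le> norm (indicat_real {0..} x *\<^sub>R exp (- (Re u) * x))"
      by (auto simp: nf indicator_def)
  qed
  show ai2: "?f absolutely_integrable_on {0<..}"
    by (rule set_integrable_subset[OF ai]) auto
  have li: "set_integrable lborel (einterval 0 \<infinity>) ?f"
  proof -
    have "integrable lebesgue (\<lambda>x. indicat_real {0<..} x *\<^sub>R ?f x)"
      using ai2 by (simp add: set_integrable_def)
    then have "integrable lborel (\<lambda>x. indicat_real {0<..} x *\<^sub>R ?f x)"
      by (subst (asm) integrable_completion) auto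
    moreover have "einterval 0 \<infinity> = {0::real<..}" by (auto simp: einterval_def zero_ereal_def)
    ultimately show ?thesis by (simp add: set_integrable_def)
  qed
  have "(LBINT x=0..\<infinity>. ?f x) = 0 - (- 1/u)"
  proof (rule interval_integral_FTC_integrable[where F="\<lambda>x. - exp (- (u * of_real x)) / u"])
    show "(0::ereal) < \<infinity>" by simp
    fix x :: real
    show "((\<lambda>x. - exp (- (u * of_real x)) / u) has_vector_derivative ?f x) (at x)"
    proof -
      have "u \<noteq> 0" using u by auto
      then have "((\<lambda>z. - exp (- (u * z)) / u) has_field_derivative exp (- (u * of_real x))) (at (of_real x))"
        by (auto intro!: derivative_eq_intros simp: field_simps)
      then show ?thesis by (rule has_vector_derivative_real_field)
    qed
  next
    show "isCont ?f x" for x by (intro continuous_intros)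
  next
    show "set_integrable lborel (einterval 0 \<infinity>) ?f" by (rule li)
  next
    have "((\<lambda>x. - exp (- (u * of_real x)) / u) \<longlongrightarrow> - exp (- (u * of_real 0)) / u) (at_right 0)"
      using u by (intro tendsto_intros continuous_intros) auto
    then show "(((\<lambda>x. - exp (- (u * of_real x)) / u) \<circ> real_of_ereal) \<longlongrightarrow> - 1 / u) (at_right 0)"
      by (simp add: zero_ereal_def ereal_tendsto_simps1)
  next
    have "((\<lambda>x::real. exp (- (u * of_real x))) \<longlongrightarrow> 0) at_top"
    proof (rule tendsto_norm_zero_cancel)
      show "((\<lambda>x::real. norm (exp (- (u * of_real x)))) \<longlongrightarrow> 0) at_top"
        unfolding nf using u by (rule exp_neg_lim)
    qed
    then have "((\<lambda>x. - exp (- (u * of_real x)) / u) \<longlongrightarrow> - 0 / u) at_top"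
      using u by (intro tendsto_intros) auto
    then show "(((\<lambda>x. - exp (- (u * of_real x)) / u) \<circ> real_of_ereal) \<longlongrightarrow> 0) (at_left \<infinity>)"
      by (simp add: ereal_tendsto_simps1)
  qed
  moreover have "(LBINT x=0..\<infinity>. ?f x) = (LINT x:{0<..}|lborel. ?f x)"
    by (simp add: zero_ereal_def interval_integral_to_infinity_eq)
  moreover have "(LINT x:{0<..}|lborel. ?f x) = integral {0<..} ?f"
    using li by (intro set_borel_integral_eq_integral) (auto simp: einterval_def zero_ereal_def greaterThan_def)
  moreover have "?f integrable_on {0<..}"
    using li by (intro set_borel_integral_eq_integral) (auto simp: einterval_def zero_ereal_def greaterThan_def)
  ultimately show "(?f has_integral 1/u) {0<..}"
    by (metis (no_types, lifting) diff_0 divide_minus_left has_integral_integrable_integral minus_minus)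
qed

lemma four_frac:
  fixes p q r t :: complex
  assumes "p \<noteq> 0" "q \<noteq> 0" "r \<noteq> 0" "t \<noteq> 0"
  shows "(1/4) * (((1/p + 1/q) - 1/r) - 1/t) = (q*r*t + p*r*t - p*q*t - p*q*r)/(4*(p*q*r*t))"
  using assms by (simp add: field_simps)

lemma sinh_integral:
  fixes a b w :: complex
  assumes "Re (w - a - b) > 0" "Re (w + a + b) > 0" "Re (w - a + b) > 0" "Re (w + a - b) > 0"
  shows "((\<lambda>x::real. sinh (a * of_real x) * sinh (b * of_real x) * exp (- (w * of_real x)))
          has_integral (2*a*b*w/((w-a-b)*(w+a+b)*(w-a+b)*(w+a-b)))) {0<..}"
    and "(\<lambda>x::real. sinh (a * of_real x) * sinh (b * of_real x) * exp (- (w * of_real x)))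
          absolutely_integrable_on {0<..}"
proof -
  define E where "E u = (\<lambda>x::real. exp (- (u * of_real x)))" for u :: complex
  have eq: "(\<lambda>x::real. sinh (a * of_real x) * sinh (b * of_real x) * exp (- (w * of_real x)))
     = (\<lambda>x. (1/4) * (((E (w-a-b) x + E (w+a+b) x) - E (w-a+b) x) - E (w+a-b) x))"
    by (rule ext) (simp add: E_def sinh_field_def field_simps flip: exp_add exp_diff)
  have nz: "w-a-b \<noteq> 0" "w+a+b \<noteq> 0" "w-a+b \<noteq> 0" "w+a-b \<noteq> 0"
    using assms by (metis zero_complex.sel(1) less_irrefl)+
  have "((\<lambda>x. (1/4) * (((E (w-a-b) x + E (w+a+b) x) - E (w-a+b) x) - E (w+a-b) x)) has_integral
       (1/4) * (((1/(w-a-b) + 1/(w+a+b)) - 1/(w-a+b)) - 1/(w+a-b))) {0<..}"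
    unfolding E_def using assms
    by (intro has_integral_mult_right has_integral_add has_integral_diff exp_integral(1)) auto
  also have "(1/4) * (((1/(w-a-b) + 1/(w+a+b)) - 1/(w-a+b)) - 1/(w+a-b)) = 2*a*b*w/((w-a-b)*(w+a+b)*(w-a+b)*(w+a-b))"
  proof -
    have "(1/4) * (((1/(w-a-b) + 1/(w+a+b)) - 1/(w-a+b)) - 1/(w+a-b)) =
       (((w+a+b)*(w-a+b)*(w+a-b)) + ((w-a-b)*(w-a+b)*(w+a-b)) - ((w-a-b)*(w+a+b)*(w+a-b))
            - ((w-a-b)*(w+a+b)*(w-a+b))) / (4*((w-a-b)*(w+a+b)*(w-a+b)*(w+a-b)))"
      using four_frac[OF nz] .
    also have "(((w+a+b)*(w-a+b)*(w+a-b)) + ((w-a-b)*(w-a+b)*(w+a-b)) - ((w-a-b)*(w+a+b)*(w+a-b))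
            - ((w-a-b)*(w+a+b)*(w-a+b))) = 4 * (2*a*b*w)" by (simp add: algebra_simps)
    finally show ?thesis by (metis (no_types) mult_divide_mult_cancel_left zero_neq_numeral)
  qed
  finally show "((\<lambda>x::real. sinh (a * of_real x) * sinh (b * of_real x) * exp (- (w * of_real x)))
          has_integral (2*a*b*w/((w-a-b)*(w+a+b)*(w-a+b)*(w+a-b)))) {0<..}" unfolding eq .
  show "(\<lambda>x::real. sinh (a * of_real x) * sinh (b * of_real x) * exp (- (w * of_real x)))
          absolutely_integrable_on {0<..}" unfolding eq E_def using assms
    by (intro set_integrable_mult_right set_integral_add(1) set_integral_diff(1) exp_integral(2)) auto
qed



lemma poch_bound:
  fixes v :: complex
  obtains B where "B > 0" "\<And>n. n \<ge> 1 \<Longrightarrow>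
     norm (pochhammer v (Suc n) / fact (Suc n)) \<le> B * real n powr Re v / real (Suc n)"
proof -
  have "convergent (rGamma_series v)" using rGamma_series_LIMSEQ by (auto simp: convergent_def)
  then have "Bseq (rGamma_series v)" by (rule convergent_imp_Bseq)
  then obtain B where B: "B > 0" "\<And>n. norm (rGamma_series v n) \<le> B" by (auto elim: BseqE)
  have "norm (pochhammer v (Suc n) / fact (Suc n)) \<le> B * real n powr Re v / real (Suc n)"
    if n: "n \<ge> 1" for n
  proof -
    have e: "exp (v * of_real (ln (real n))) \<noteq> 0" by simp
    have "pochhammer v (Suc n) / fact (Suc n) =
          rGamma_series v n * exp (v * of_real (ln (real n))) / of_nat (Suc n)"
      using e by (simp add: rGamma_series_def field_simps fact_Suc del: of_nat_Suc)
    also have "norm \<dots> = norm (rGamma_series v n) * real n powr Re v / real (Suc n)"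
      using n by (simp add: norm_divide norm_mult norm_exp_eq_Re powr_def del: of_nat_Suc)
    also have "\<dots> \<le> B * real n powr Re v / real (Suc n)"
      by (intro divide_right_mono mult_right_mono B(2)) auto
    finally show ?thesis .
  qed
  with B(1) that show ?thesis by blast
qed

lemma summable_poch_cube:
  fixes v :: complex and \<mu> \<gamma> :: real
  assumes "Re v < 3" "\<mu> > 0" "\<gamma> > 0"
  shows "summable (\<lambda>k. norm (pochhammer v k / fact k) / (\<mu> + 2 * real k * \<gamma>) ^ 3)"
proof -
  obtain B where B: "B > 0" "\<And>n. n \<ge> 1 \<Longrightarrow>
     norm (pochhammer v (Suc n) / fact (Suc n)) \<le> B * real n powr Re v / real (Suc n)"
    using poch_bound by blast
  have S: "summable (\<lambda>n. B / (8 * \<gamma>^3) * real n powr (Re v - 4))"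
    using assms by (intro summable_mult) (simp add: summable_real_powr_iff)
  have E: "eventually (\<lambda>n. norm (norm (pochhammer v (Suc n) / fact (Suc n)) / (\<mu> + 2 * real (Suc n) * \<gamma>) ^ 3)
      \<le> B / (8 * \<gamma>^3) * real n powr (Re v - 4)) sequentially"
    using eventually_ge_at_top[of 1]
  proof eventually_elim
    case (elim n)
    have n0: "real n > 0" using elim by simp
    have d1: "(2 * real n * \<gamma>) ^ 3 \<le> (\<mu> + 2 * real (Suc n) * \<gamma>) ^ 3"
    proof (rule power_mono)
      show "2 * real n * \<gamma> \<le> \<mu> + 2 * real (Suc n) * \<gamma>" using assms by (simp add: algebra_simps)
      show "0 \<le> 2 * real n * \<gamma>" using assms by simp
    qed
    have d0: "0 < (2 * real n * \<gamma>) ^ 3" using n0 assms by simp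
    have "norm (norm (pochhammer v (Suc n) / fact (Suc n)) / (\<mu> + 2 * real (Suc n) * \<gamma>) ^ 3)
        = norm (pochhammer v (Suc n) / fact (Suc n)) / (\<mu> + 2 * real (Suc n) * \<gamma>) ^ 3"
      using assms by simp
    also have "\<dots> \<le> (B * real n powr Re v / real (Suc n)) / (2 * real n * \<gamma>) ^ 3"
      using B(1) by (intro frac_le B(2) elim d0 d1) auto
    also have "\<dots> \<le> (B * real n powr Re v / real n) / (2 * real n * \<gamma>) ^ 3"
    proof (rule divide_right_mono[OF divide_left_mono])
      show "real n \<le> real (Suc n)" by simp
      show "0 \<le> B * real n powr Re v" using B(1) by simp
      show "0 < real (Suc n) * real n" using n0 by simp
      show "0 \<le> (2 * real n * \<gamma>) ^ 3" using d0 by simp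
    qed
    also have "\<dots> = B / (8 * \<gamma>^3) * (real n powr Re v / real n ^ 4)"
    proof -
      have p: "(2 * real n * \<gamma>) ^ 3 = 8 * \<gamma>^3 * real n ^ 3" by (simp add: power_mult_distrib)
      have q: "real n ^ 4 = real n * real n ^ 3" by (simp add: eval_nat_numeral)
      show ?thesis unfolding p q by simp
    qed
    also have "real n powr Re v / real n ^ 4 = real n powr (Re v - 4)"
      using n0 by (simp add: powr_diff powr_realpow)
    finally show ?case .
  qed
  have "summable (\<lambda>n. norm (pochhammer v (Suc n) / fact (Suc n)) / (\<mu> + 2 * real (Suc n) * \<gamma>) ^ 3)"
    by (rule summable_comparison_test_ev[OF E S])
  then show ?thesis
    using summable_Suc_iff[of "\<lambda>k. norm (pochhammer v k / fact k) / (\<mu> + 2 * real k * \<gamma>) ^ 3"] by simp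
qed



lemma real_exp_integral:
  fixes r :: real assumes r: "r > 0"
  shows "set_integrable lebesgue {0<..} (\<lambda>x::real. exp (- (r * x)))"
    and "(LINT x:{0<..}|lebesgue. exp (- (r * x))) = 1 / r"
proof -
  have h0: "((\<lambda>x::real. exp (- r * x)) has_integral exp (- r * 0) / r) {0..}"
    using has_integral_exp_minus_to_infinity[OF r, of 0] .
  have "((\<lambda>x::real. exp (- (r * x))) has_integral 1 / r) {0..}"
    using h0 by simp
  moreover have "((\<lambda>x::real. exp (- (r * x))) has_integral 1 / r) {0..} \<longleftrightarrow>
         ((\<lambda>x::real. exp (- (r * x))) has_integral 1 / r) {0<..}"
    by (rule has_integral_spike_set_eq; rule negligible_subset[of "{0}"]) auto
  ultimately have h: "((\<lambda>x::real. exp (- (r * x))) has_integral 1 / r) {0<..}" by blast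
  show si: "set_integrable lebesgue {0<..} (\<lambda>x::real. exp (- (r * x)))"
    using h by (intro nonnegative_absolutely_integrable_1) (auto simp: integrable_on_def)
  show "(LINT x:{0<..}|lebesgue. exp (- (r * x))) = 1 / r"
    using set_lebesgue_integral_eq_integral(2)[OF si] h by (simp add: integral_unique)
qed

lemma quad_exp_bound:
  fixes l x :: real assumes l: "l > 0" and x: "x \<ge> 0"
  shows "x^2 * exp (- (l * x)) \<le> 16 / l^2 * exp (- (l / 2 * x))"
proof -
  define t where "t = l * x / 2"
  have t0: "t \<ge> 0" using l x by (simp add: t_def)
  have "exp t = exp (t/2)^2" by (simp add: power2_eq_square flip: exp_add)
  moreover have "1 + t/2 \<le> exp (t/2)" by (rule exp_ge_add_one_self)
  then have "(1 + t/2)^2 \<le> exp (t/2)^2" using t0 by (intro power_mono) auto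
  moreover have "t^2/4 \<le> (1 + t/2)^2" using t0 by (simp add: power2_eq_square field_simps)
  ultimately have "t^2 \<le> 4 * exp t" by simp
  then have "l^2 * x^2 \<le> 16 * exp (l / 2 * x)"
    by (simp add: t_def power_mult_distrib field_simps)
  then have "x^2 \<le> 16 / l^2 * exp (l / 2 * x)" using l by (simp add: field_simps)
  then have "x^2 * exp (- (l * x)) \<le> 16 / l^2 * exp (l / 2 * x) * exp (- (l * x))"
    by (intro mult_right_mono) auto
  also have "\<dots> = 16 / l^2 * exp (- (l / 2 * x))"
    by (simp add: mult.assoc flip: exp_add)
  finally show ?thesis .
qed

lemma term_norm_bound:
  fixes a b w :: complex and x :: real assumes x: "x \<ge> 0"
  shows "norm (sinh (a * of_real x) * sinh (b * of_real x) * exp (- (w * of_real x)))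
     \<le> norm a * norm b * (x^2 * exp (- ((Re w - (\<bar>Re a\<bar> + \<bar>Re b\<bar>)) * x)))"
proof -
  have sa: "norm (sinh (a * of_real x)) \<le> exp (\<bar>Re a\<bar> * x) * (norm a * x)"
    using sinh_bound[of "a * of_real x"] x by (simp add: abs_mult norm_mult)
  have sb: "norm (sinh (b * of_real x)) \<le> exp (\<bar>Re b\<bar> * x) * (norm b * x)"
    using sinh_bound[of "b * of_real x"] x by (simp add: abs_mult norm_mult)
  have "norm (sinh (a * of_real x) * sinh (b * of_real x) * exp (- (w * of_real x)))
      = norm (sinh (a * of_real x)) * norm (sinh (b * of_real x)) * exp (- (Re w * x))"
    by (simp add: norm_mult norm_exp_eq_Re)
  also have "\<dots> \<le> (exp (\<bar>Re a\<bar> * x) * (norm a * x)) * (exp (\<bar>Re b\<bar> * x) * (norm b * x)) * exp (- (Re w * x))"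
    using x by (intro mult_right_mono mult_mono sa sb) auto
  also have "\<dots> = norm a * norm b * (x^2 * (exp (\<bar>Re a\<bar> * x) * exp (\<bar>Re b\<bar> * x) * exp (- (Re w * x))))"
    by (simp add: power2_eq_square algebra_simps)
  also have "exp (\<bar>Re a\<bar> * x) * exp (\<bar>Re b\<bar> * x) * exp (- (Re w * x)) = exp (- ((Re w - (\<bar>Re a\<bar> + \<bar>Re b\<bar>)) * x))"
    by (simp add: algebra_simps flip: exp_add)
  finally show ?thesis .
qed

lemma poch_ratio:
  fixes s :: complex
  shows "pochhammer s k * (s + of_nat k) = s * pochhammer (1 + s) k"
  using pochhammer_rec[of s k] pochhammer_rec'[of s k] by (simp add: add.commute mult.commute)




lemma main_aux:
  fixes v a b c :: complex
  assumes "Re v < 3" "Re c > 0"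
    and "Re (v * c + a + b) > 0" "Re (v * c + a - b) > 0"
    and "Re (v * c - a + b) > 0" "Re (v * c - a - b) > 0"
  defines "p \<equiv> \<lambda>k. pochhammer v k / fact k"
  defines "w \<equiv> \<lambda>k::nat. (v + 2 * of_nat k) * c"
  defines "T \<equiv> \<lambda>k. 2*a*b*w k/((w k-a-b)*(w k+a+b)*(w k-a+b)*(w k+a-b))"
  defines "F \<equiv> \<lambda>x::real. sinh (a * of_real x) * sinh (b * of_real x) / sinh_pow v c x"
  shows "\<exists>I. (F has_integral I) {0<..} \<and> (\<lambda>k. 2 powr v * p k * T k) sums I"
proof -
  define g where "g k x = sinh (a * of_real x) * sinh (b * of_real x) * exp (- (w k * of_real x))" for k x
  define f where "f k x = indicator {0<..} x *\<^sub>R (2 powr v * p k * g k x)" for k and x :: real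
  define \<gamma> where "\<gamma> = Re c"
  define \<delta> where "\<delta> = \<bar>Re a\<bar> + \<bar>Re b\<bar>"
  define \<mu> where "\<mu> = Re (v * c) - \<delta>"
  have \<gamma>0: "\<gamma> > 0" using assms by (simp add: \<gamma>_def)
  have \<mu>0: "\<mu> > 0" using assms(3-6) unfolding \<mu>_def \<delta>_def by (simp add: abs_if)
  have Rew: "Re (w k) = Re (v * c) + 2 * real k * \<gamma>" for k
    by (simp add: w_def \<gamma>_def algebra_simps)
  have wconds: "Re (w k - a - b) > 0" "Re (w k + a + b) > 0" "Re (w k - a + b) > 0" "Re (w k + a - b) > 0" for k
  proof -
    have k0: "2 * real k * \<gamma> \<ge> 0" using \<gamma>0 by simp
    have r: "Re (w k) = Re (v * c) + 2 * real k * \<gamma>" by (rule Rew)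
    have "Re (w k - a - b) = Re (v * c - a - b) + 2 * real k * \<gamma>" using r by simp
    then show "Re (w k - a - b) > 0" using assms(6) k0 by linarith
    have "Re (w k + a + b) = Re (v * c + a + b) + 2 * real k * \<gamma>" using r by simp
    then show "Re (w k + a + b) > 0" using assms(3) k0 by linarith
    have "Re (w k - a + b) = Re (v * c - a + b) + 2 * real k * \<gamma>" using r by simp
    then show "Re (w k - a + b) > 0" using assms(5) k0 by linarith
    have "Re (w k + a - b) = Re (v * c + a - b) + 2 * real k * \<gamma>" using r by simp
    then show "Re (w k + a - b) > 0" using assms(4) k0 by linarith
  qed
  define q where "q x = exp (-2 * c * of_real x)" for x :: real
  define C where "C x = 2 powr v * (sinh (a * of_real x) * sinh (b * of_real x)) * exp (- (v * c * of_real x))" for x :: real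
  have nq: "norm (q x) < 1" if x: "x > 0" for x :: real
    using x \<gamma>0 by (simp add: q_def norm_exp_eq_Re \<gamma>_def)
  have gb: "((- v) gchoose n) * (- q x) ^ n = p n * q x ^ n" for n x
  proof -
    have m1: "(-1::complex)^n * (-1)^n = 1" by (simp flip: power_mult_distrib)
    have "((- v) gchoose n) * (- q x) ^ n = ((-1)^n * (-1)^n) * (pochhammer v n / fact n * q x ^ n)"
      unfolding gbinomial_pochhammer power_minus[of "q x"] by simp
    then show ?thesis using m1 by (simp add: p_def)
  qed
  have Cg: "C x * (p n * q x ^ n) = 2 powr v * p n * g n x" for n x
  proof -
    have "exp (- (v * c * of_real x)) * q x ^ n = exp (- (w n * of_real x))"
      by (simp add: q_def w_def algebra_simps flip: exp_of_nat_mult exp_add)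
    then show ?thesis by (simp add: C_def g_def algebra_simps)
  qed
  have S1: "(\<lambda>k. 2 powr v * p k * g k x) sums F x" if x: "x > 0" for x :: real
  proof -
    have "(\<lambda>n. ((- v) gchoose n) * (- q x) ^ n) sums (1 + - q x) powr (- v)"
      using nq[OF x] by (intro gen_binomial_complex) simp
    then have "(\<lambda>n. p n * q x ^ n) sums (1 - q x) powr (- v)" by (simp add: gb)
    then have "(\<lambda>n. C x * (p n * q x ^ n)) sums (C x * (1 - q x) powr (- v))" by (rule sums_mult)
    moreover have "C x * (1 - q x) powr (- v) = F x"
    proof -
      have "1 - q x \<noteq> 0" using nq[OF x] by auto
      then have n1: "(1 - q x) powr v \<noteq> 0" by (simp add: powr_def)
      have n2: "(2::complex) powr (- v) \<noteq> 0" by (simp add: powr_def)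
      have e1: "(2::complex) powr v = inverse (2 powr (- v))" by (simp add: powr_minus)
      have i1: "(1 - q x) powr (-v) = inverse ((1 - exp (-2 * c * of_real x)) powr v)"
        by (simp add: q_def powr_minus)
      have i2: "exp (- (v * c * of_real x)) = inverse (exp (v * c * of_real x))"
        by (simp add: exp_minus)
      show ?thesis unfolding F_def sinh_pow_def C_def e1 i1 i2
        by (simp add: divide_inverse inverse_mult_distrib mult_ac)
    qed
    ultimately show ?thesis by (simp add: Cg)
  qed
  have gfun: "g k = (\<lambda>x. sinh (a * of_real x) * sinh (b * of_real x) * exp (- (w k * of_real x)))" for k
    by (simp add: g_def fun_eq_iff)
  have gi: "set_integrable lebesgue {0<..} (g k)" for k
    unfolding gfun using sinh_integral(2)[OF wconds[of k]] .
  have gI: "(LINT x:{0<..}|lebesgue. g k x) = T k" for k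
  proof -
    have h: "(g k has_integral T k) {0<..}"
      unfolding gfun T_def using sinh_integral(1)[OF wconds[of k]] .
    show ?thesis using set_lebesgue_integral_eq_integral(2)[OF gi[of k]] integral_unique[OF h] by simp
  qed
  have fi: "integrable lebesgue (f k)" for k
  proof -
    have "set_integrable lebesgue {0<..} (\<lambda>x. (2 powr v * p k) * g k x)"
      using gi[of k] by (rule set_integrable_mult_right)
    then show ?thesis unfolding set_integrable_def f_def by (simp add: mult.assoc)
  qed
  have fI: "integral\<^sup>L lebesgue (f k) = 2 powr v * p k * T k" for k
  proof -
    have "integral\<^sup>L lebesgue (f k) = (LINT x:{0<..}|lebesgue. (2 powr v * p k) * g k x)"
      unfolding set_lebesgue_integral_def f_def by (simp add: mult.assoc)
    also have "\<dots> = 2 powr v * p k * T k" by (simp add: gI)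
    finally show ?thesis .
  qed
  define K where "K = norm ((2::complex) powr v) * norm a * norm b"
  define lam where "lam k = \<mu> + 2 * real k * \<gamma>" for k
  have lam0: "lam k > 0" for k using \<mu>0 \<gamma>0 by (simp add: lam_def add_pos_nonneg)
  have lamw: "Re (w k) - (\<bar>Re a\<bar> + \<bar>Re b\<bar>) = lam k" for k
    by (simp add: Rew lam_def \<mu>_def \<delta>_def)
  define bd where "bd k x = indicator {0<..} x *\<^sub>R (K * norm (p k) * (16 / lam k ^ 2) * exp (- (lam k / 2 * x)))" for k and x :: real
  have K0: "K \<ge> 0" by (simp add: K_def)
  have fbd: "norm (f k x) \<le> bd k x" for k x
  proof (cases "x > 0")
    case True
    have "norm (f k x) = norm ((2::complex) powr v) * norm (p k) * norm (g k x)"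
      using True by (simp add: f_def norm_mult)
    also have "\<dots> \<le> norm ((2::complex) powr v) * norm (p k) * (norm a * norm b * (x^2 * exp (- (lam k * x))))"
      using term_norm_bound[of x a b "w k"] True unfolding g_def lamw
      by (intro mult_left_mono) auto
    also have "\<dots> \<le> norm ((2::complex) powr v) * norm (p k) * (norm a * norm b * (16 / lam k ^ 2 * exp (- (lam k / 2 * x))))"
      using quad_exp_bound[OF lam0[of k], of x] True by (intro mult_left_mono) auto
    also have "\<dots> = bd k x" using True by (simp add: bd_def K_def mult_ac)
    finally show ?thesis .
  qed (simp add: f_def bd_def)
  have bdi: "integrable lebesgue (bd k)" for k
  proof -
    have "set_integrable lebesgue {0<..} (\<lambda>x. (K * norm (p k) * (16 / lam k ^ 2)) * exp (- (lam k / 2 * x)))"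
      using real_exp_integral(1)[of "lam k / 2"] lam0[of k] by (intro set_integrable_mult_right) auto
    then show ?thesis unfolding set_integrable_def bd_def .
  qed
  have bdI: "integral\<^sup>L lebesgue (bd k) = 32 * K * (norm (p k) / lam k ^ 3)" for k
  proof -
    have "integral\<^sup>L lebesgue (bd k) = (LINT x:{0<..}|lebesgue. (K * norm (p k) * (16 / lam k ^ 2)) * exp (- (lam k / 2 * x)))"
      unfolding set_lebesgue_integral_def bd_def ..
    also have "\<dots> = (K * norm (p k) * (16 / lam k ^ 2)) * (1 / (lam k / 2))"
      using real_exp_integral(2)[of "lam k / 2"] lam0[of k] by simp
    also have "\<dots> = 32 * K * (norm (p k) / lam k ^ 3)"
      using lam0[of k] by (simp add: field_simps power2_eq_square power3_eq_cube)
    finally show ?thesis .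
  qed
  have S3: "summable (\<lambda>k. \<integral>x. norm (f k x) \<partial>lebesgue)"
  proof (rule summable_comparison_test)
    have "summable (\<lambda>k. norm (pochhammer v k / fact k) / (\<mu> + 2 * real k * \<gamma>) ^ 3)"
      by (rule summable_poch_cube[OF assms(1) \<mu>0 \<gamma>0])
    then show "summable (\<lambda>k. 32 * K * (norm (p k) / lam k ^ 3))"
      unfolding p_def lam_def by (rule summable_mult)
    show "\<exists>N. \<forall>n\<ge>N. norm (\<integral>x. norm (f n x) \<partial>lebesgue) \<le> 32 * K * (norm (p n) / lam n ^ 3)"
    proof (intro exI allI impI)
      fix n :: nat
      have "norm (\<integral>x. norm (f n x) \<partial>lebesgue) = (\<integral>x. norm (f n x) \<partial>lebesgue)"
        by (simp add: integral_nonneg_AE)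
      also have "\<dots> \<le> integral\<^sup>L lebesgue (bd n)"
        using fi[of n] bdi[of n] fbd[of n] by (intro integral_mono) auto
      finally show "norm (\<integral>x. norm (f n x) \<partial>lebesgue) \<le> 32 * K * (norm (p n) / lam n ^ 3)"
        by (simp add: bdI)
    qed
  qed
  have S4: "summable (\<lambda>k. norm (f k x))" for x
  proof (cases "x > 0")
    case True
    have "ereal (norm (- q x)) < conv_radius (\<lambda>n. (- v) gchoose n)"
      using nq[OF True] by (simp add: conv_radius_gchoose one_ereal_def)
    then have "summable (\<lambda>n. norm (((- v) gchoose n) * (- q x) ^ n))"
      by (rule abs_summable_in_conv_radius)
    then have "summable (\<lambda>n. norm (C x) * norm (((- v) gchoose n) * (- q x) ^ n))"
      by (rule summable_mult)
    moreover have "norm (C x) * norm (((- v) gchoose n) * (- q x) ^ n) = norm (f n x)" for n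
      using True by (simp add: gb f_def flip: Cg norm_mult)
    ultimately show ?thesis by simp
  qed (simp add: f_def)
  have sumf: "(\<lambda>x. \<Sum>k. f k x) = (\<lambda>x. indicator {0<..} x *\<^sub>R F x)"
  proof
    fix x :: real
    show "(\<Sum>k. f k x) = indicator {0<..} x *\<^sub>R F x"
    proof (cases "x > 0")
      case True
      then show ?thesis using sums_unique[OF S1[OF True]] by (simp add: f_def)
    qed (simp add: f_def)
  qed
  have int: "integrable lebesgue (\<lambda>x. \<Sum>k. f k x)"
    by (rule integrable_suminf[OF fi AE_I2[OF S4] S3])
  have sms: "(\<lambda>k. integral\<^sup>L lebesgue (f k)) sums (\<integral>x. (\<Sum>k. f k x) \<partial>lebesgue)"
    by (rule sums_integral[OF fi AE_I2[OF S4] S3])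
  have Fi: "set_integrable lebesgue {0<..} F"
    using int unfolding sumf set_integrable_def .
  have "(F has_integral (LINT x:{0<..}|lebesgue. F x)) {0<..}"
    by (rule has_integral_set_lebesgue[OF Fi])
  moreover have "(\<lambda>k. 2 powr v * p k * T k) sums (LINT x:{0<..}|lebesgue. F x)"
    using sms unfolding fI sumf set_lebesgue_integral_def .
  ultimately show ?thesis by blast
qed



lemma poch_shift_up:
  fixes s :: complex
  assumes "s \<noteq> 0"
  shows "pochhammer (1 + s) k = pochhammer s k * (s + of_nat k) / s"
  using poch_ratio[of s k] assms by (simp add: field_simps)

lemma final_alg:
  fixes E pk W v a b c P D :: complex
  assumes "c \<noteq> 0" "v \<noteq> 0" "P \<noteq> 0" "D \<noteq> 0"
  shows "E * pk * (2 * a * b * W / D) = (E * 2) * v * a * b * c / P * (pk * (W / (v * c)) * (P / D))"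
  using assms by (simp add: field_simps)

lemma ratio_alg:
  fixes pv A E d s3 s4 s5 s6 B3 B4 B5 B6 e3 e4 e5 e6 F :: complex
  assumes "A \<noteq> 0" "B3 \<noteq> 0" "B4 \<noteq> 0" "B5 \<noteq> 0" "B6 \<noteq> 0" "F \<noteq> 0"
    "d \<noteq> 0" "e3 \<noteq> 0" "e4 \<noteq> 0" "e5 \<noteq> 0" "e6 \<noteq> 0"
  shows "(pv * ((A * E / d) * ((s3 * B3 / e3) * ((s5 * B5 / e5) * ((s4 * B4 / e4) * ((s6 * B6 / e6) * 1))))))
       / (A * (B3 * (B5 * (B4 * (B6 * 1))))) * 1 ^ k / F
     = pv / F * (E / d) * (s3 / e3) * (s5 / e5) * (s4 / e4) * (s6 / e6)"
  using assms by (simp add: field_simps)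

lemma poch_shift_down:
  fixes s :: complex
  assumes "s + of_nat k \<noteq> 0"
  shows "pochhammer s k = s * pochhammer (1 + s) k / (s + of_nat k)"
  using poch_ratio[of s k] assms by (simp add: field_simps)

theorem mainTheorem14:
  fixes v a b c :: complex
  assumes "Re v < 3" "Re c > 0"
    and "Re (v * c + a + b) > 0" "Re (v * c + a - b) > 0"
    and "Re (v * c - a + b) > 0" "Re (v * c - a - b) > 0"
    and "v / 2 \<notin> \<int>\<^sub>\<le>\<^sub>0"
    and "1 + (v/2 - a/(2*c) - b/(2*c)) \<notin> \<int>\<^sub>\<le>\<^sub>0"
    and "1 + (v/2 - a/(2*c) + b/(2*c)) \<notin> \<int>\<^sub>\<le>\<^sub>0"
    and "1 + (v/2 + a/(2*c) + b/(2*c)) \<notin> \<int>\<^sub>\<le>\<^sub>0"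
    and "1 + (v/2 + a/(2*c) - b/(2*c)) \<notin> \<int>\<^sub>\<le>\<^sub>0"
  shows "let s3 = v/2 - a/(2*c) - b/(2*c); s4 = v/2 - a/(2*c) + b/(2*c);
             s5 = v/2 + a/(2*c) + b/(2*c); s6 = v/2 + a/(2*c) - b/(2*c);
             P = (v * c - a - b) * (v * c + a + b) * (v * c - a + b) * (v * c + a - b)
         in ((\<lambda>x::real. sinh (a * of_real x) * sinh (b * of_real x) / sinh_pow v c x)
              has_integral
              (2 powr (v + 1) * v * a * b * c / P *
               hypergeom [v, 1 + v/2, s3, s5, s4, s6] [v/2, 1 + s3, 1 + s5, 1 + s4, 1 + s6] 1))
            {0<..}"
proof -
  define s3 where "s3 = v/2 - a/(2*c) - b/(2*c)"
  define s4 where "s4 = v/2 - a/(2*c) + b/(2*c)"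
  define s5 where "s5 = v/2 + a/(2*c) + b/(2*c)"
  define s6 where "s6 = v/2 + a/(2*c) - b/(2*c)"
  define P where "P = (v * c - a - b) * (v * c + a + b) * (v * c - a + b) * (v * c + a - b)"
  define p where "p \<equiv> \<lambda>k. pochhammer v k / fact k"
  define w where "w \<equiv> \<lambda>k::nat. (v + 2 * of_nat k) * c"
  define T where "T \<equiv> \<lambda>k. 2*a*b*w k/((w k-a-b)*(w k+a+b)*(w k-a+b)*(w k+a-b))"
  define F where "F \<equiv> \<lambda>x::real. sinh (a * of_real x) * sinh (b * of_real x) / sinh_pow v c x"
  obtain I where I: "(F has_integral I) {0<..}" "(\<lambda>k. 2 powr v * p k * T k) sums I"
    using main_aux[OF assms(1-6)] unfolding p_def w_def T_def F_def by blast
  define K0 where "K0 = 2 powr (v + 1) * v * a * b * c / P"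
  define h where "h k = (\<Prod>a\<leftarrow>[v, 1 + v/2, s3, s5, s4, s6]. pochhammer a k) /
      (\<Prod>b\<leftarrow>[v/2, 1 + s3, 1 + s5, 1 + s4, 1 + s6]. pochhammer b k) * 1 ^ k / fact k" for k
  have hyp: "hypergeom [v, 1 + v/2, s3, s5, s4, s6] [v/2, 1 + s3, 1 + s5, 1 + s4, 1 + s6] 1 = suminf h"
    unfolding hypergeom_def h_def ..
  have c0: "c \<noteq> 0" using assms(2) by auto
  have v0: "v \<noteq> 0" using assms(7) by auto
  have nzl: "\<And>z::complex. Re z > 0 \<Longrightarrow> z \<noteq> 0" by auto
  have nz: "v * c - a - b \<noteq> 0" "v * c + a + b \<noteq> 0" "v * c - a + b \<noteq> 0" "v * c + a - b \<noteq> 0"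
    using assms(3-6) by (auto intro!: nzl simp del: minus_complex.sel plus_complex.sel)
  have Rew: "Re (w k) = Re (v * c) + 2 * real k * Re c" for k
    by (simp add: w_def algebra_simps)
  have wnz: "w k - a - b \<noteq> 0" "w k + a + b \<noteq> 0" "w k - a + b \<noteq> 0" "w k + a - b \<noteq> 0" for k
  proof -
    have k0: "2 * real k * Re c \<ge> 0" using assms(2) by simp
    have r: "Re (w k) = Re (v * c) + 2 * real k * Re c" by (rule Rew)
    have "Re (w k - a - b) = Re (v * c - a - b) + 2 * real k * Re c" using r by simp
    then show "w k - a - b \<noteq> 0" using assms(6) k0 by (intro nzl) linarith
    have "Re (w k + a + b) = Re (v * c + a + b) + 2 * real k * Re c" using r by simp
    then show "w k + a + b \<noteq> 0" using assms(3) k0 by (intro nzl) linarith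
    have "Re (w k - a + b) = Re (v * c - a + b) + 2 * real k * Re c" using r by simp
    then show "w k - a + b \<noteq> 0" using assms(5) k0 by (intro nzl) linarith
    have "Re (w k + a - b) = Re (v * c + a - b) + 2 * real k * Re c" using r by simp
    then show "w k + a - b \<noteq> 0" using assms(4) k0 by (intro nzl) linarith
  qed
  have sq: "s3 = (v * c - a - b)/(2 * c)" "s4 = (v * c - a + b)/(2 * c)" "s5 = (v * c + a + b)/(2 * c)" "s6 = (v * c + a - b)/(2 * c)"
    using c0 by (simp_all add: s3_def s4_def s5_def s6_def field_simps)
  have sk: "s3 + of_nat k = (w k - a - b)/(2 * c)" "s4 + of_nat k = (w k - a + b)/(2 * c)"
     "s5 + of_nat k = (w k + a + b)/(2 * c)" "s6 + of_nat k = (w k + a - b)/(2 * c)"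
     "v/2 + of_nat k = w k/(2 * c)" for k
    using c0 by (simp_all add: s3_def s4_def s5_def s6_def w_def field_simps)
  have sknz: "s3 + of_nat k \<noteq> 0" "s4 + of_nat k \<noteq> 0" "s5 + of_nat k \<noteq> 0" "s6 + of_nat k \<noteq> 0" for k
    using wnz[of k] c0 by (simp_all add: sk)
  have A0: "pochhammer (v/2) k \<noteq> 0" for k
    using assms(7) pochhammer_eq_0_imp_nonpos_Int by blast
  have B0: "pochhammer (1 + s3) k \<noteq> 0" "pochhammer (1 + s4) k \<noteq> 0"
      "pochhammer (1 + s5) k \<noteq> 0" "pochhammer (1 + s6) k \<noteq> 0" for k
    using assms(8-11) pochhammer_eq_0_imp_nonpos_Int unfolding s3_def s4_def s5_def s6_def by blast+
  have v20: "v/2 \<noteq> 0" using v0 by simp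
  have h1: "h k = p k * ((v / 2 + of_nat k) / (v / 2)) * (s3 / (s3 + of_nat k)) * (s5 / (s5 + of_nat k))
        * (s4 / (s4 + of_nat k)) * (s6 / (s6 + of_nat k))" for k
  proof -
    have "h k = (pochhammer v k * (pochhammer (1 + v / 2) k * (pochhammer s3 k * (pochhammer s5 k * (pochhammer s4 k * (pochhammer s6 k * 1))))))
       / (pochhammer (v / 2) k * (pochhammer (1 + s3) k * (pochhammer (1 + s5) k * (pochhammer (1 + s4) k * (pochhammer (1 + s6) k * 1))))) * 1 ^ k / fact k"
      by (simp only: h_def list.map prod_list.Cons prod_list.Nil)
    also have "\<dots> = p k * ((v / 2 + of_nat k) / (v / 2)) * (s3 / (s3 + of_nat k)) * (s5 / (s5 + of_nat k))
        * (s4 / (s4 + of_nat k)) * (s6 / (s6 + of_nat k))"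
      unfolding poch_shift_up[OF v20, of k] poch_shift_down[OF sknz(1)] poch_shift_down[OF sknz(2)]
        poch_shift_down[OF sknz(3)] poch_shift_down[OF sknz(4)] p_def
      by (rule ratio_alg[OF A0 B0(1) B0(2) B0(3) B0(4) _ v20 sknz(1) sknz(2) sknz(3) sknz(4)]) simp
    finally show ?thesis .
  qed
  have h2: "(v/2 + of_nat k)/(v/2) = w k/(v * c)" for k
    using c0 v0 by (simp add: sk w_def field_simps)
  have h3: "s3/(s3 + of_nat k) = (v * c - a - b)/(w k - a - b)" "s4/(s4 + of_nat k) = (v * c - a + b)/(w k - a + b)"
      "s5/(s5 + of_nat k) = (v * c + a + b)/(w k + a + b)" "s6/(s6 + of_nat k) = (v * c + a - b)/(w k + a - b)" for k
  proof -
    have cc: "(x / (2 * c)) / (y / (2 * c)) = x / y" for x y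
      using c0 by (cases "y = 0") (simp_all add: field_simps)
    show "s3/(s3 + of_nat k) = (v * c - a - b)/(w k - a - b)" by (simp only: sk) (simp only: sq cc)
    show "s4/(s4 + of_nat k) = (v * c - a + b)/(w k - a + b)" by (simp only: sk) (simp only: sq cc)
    show "s5/(s5 + of_nat k) = (v * c + a + b)/(w k + a + b)" by (simp only: sk) (simp only: sq cc)
    show "s6/(s6 + of_nat k) = (v * c + a - b)/(w k + a - b)" by (simp only: sk) (simp only: sq cc)
  qed
  have p2: "(2::complex) powr (v + 1) = 2 powr v * 2" by (simp add: powr_add)
  have hk: "2 powr v * p k * T k = K0 * h k" for k
  proof -
    have "h k = p k * (w k / (v * c)) * (P / ((w k - a - b) * (w k + a + b) * (w k - a + b) * (w k + a - b)))"
      unfolding h1 h2 h3 P_def by (simp add: times_divide_times_eq mult_ac)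
    moreover have "P \<noteq> 0" using nz by (simp add: P_def)
    moreover have "(w k - a - b) * (w k + a + b) * (w k - a + b) * (w k + a - b) \<noteq> 0" using wnz[of k] by simp
    ultimately show ?thesis unfolding K0_def T_def p2 using final_alg c0 v0 by (simp add: mult_ac)
  qed
  have "I = K0 * suminf h"
  proof (cases "K0 = 0")
    case True
    then have "(\<lambda>k. 0) sums I" using I(2) by (simp add: hk)
    then show ?thesis using True sums_unique2[OF _ sums_zero] by auto
  next
    case False
    have "(\<lambda>k. K0 * h k) sums I" using I(2) by (simp add: hk)
    then have "(\<lambda>k. inverse K0 * (K0 * h k)) sums (inverse K0 * I)" by (rule sums_mult)
    moreover have "(\<lambda>k. inverse K0 * (K0 * h k)) = h" using False by (simp add: fun_eq_iff)
    ultimately have "h sums (inverse K0 * I)" by simp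
    then show ?thesis using False by (simp add: sums_iff)
  qed
  then show ?thesis
    unfolding Let_def s3_def[symmetric] s4_def[symmetric] s5_def[symmetric] s6_def[symmetric]
      P_def[symmetric] hyp
    using I(1) unfolding F_def K0_def by simp
qed

end
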